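(* Let $\mathcal{F}$ be a family of finite subsets of $\mathbb{N}$ with $\bigcup\mathcal{F}=\mathbb{N}$, and assume $\mathcal{F}$ is convergence enforcing. Then there is a finite constant $C=C(\mathcal{F})$ such that for every sequence $(a_i)_{i\in\mathbb{N}}$ of nonnegative reals: if $\sum_{i\in A}a_i\le1$ for all $A\in\mathcal{F}$, then $\sum_{i\in\mathbb{N}}a_i\le C$.
   Context: A family $\mathcal{F}$ of finite subsets of $\mathbb{N}=\{1,2,\ldots\}$ is convergence enforcing if for every sequence $(a_i)_{i\in\mathbb{N}}$ of nonnegative reals: if $\sum_{i\in A}a_i\le1$ for all $A\in\mathcal{F}$, then $\sum_{i\in\mathbb{N}}a_i<\infty$. *)

theory Defs
  imports "HOL-Analysis.Analysis"
begin

text \<open>The paper's N = {1,2,...} is rendered as the set {1..} of type nat.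
  A sequence (a_i) indexed by N is a function nat => real, only its values on {1..} matter.\<close>

definition convergence_enforcing :: "nat set set \<Rightarrow> bool" where
  "convergence_enforcing F \<longleftrightarrow>
     (\<forall>a :: nat \<Rightarrow> real. (\<forall>i\<in>{1..}. 0 \<le> a i) \<longrightarrow> (\<forall>A\<in>F. sum a A \<le> 1)
        \<longrightarrow> a summable_on {1..})"

end

theory Submission
  imports Defs
begin

lemma finite_big_subset:
  fixes a :: "nat \<Rightarrow> real"
  assumes "a summable_on S" "infsum a S > C"
  shows "\<exists>X. finite X \<and> X \<subseteq> S \<and> sum a X > C"
proof -
  have "(sum a \<longlongrightarrow> infsum a S) (finite_subsets_at_top S)"
    using has_sum_infsum[OF assms(1)] unfolding has_sum_def .
  hence "eventually (\<lambda>X. sum a X > C) (finite_subsets_at_top S)"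
    using assms(2) by (rule order_tendstoD(1))
  then obtain X where "finite X" "X \<subseteq> S" "\<And>Y. finite Y \<Longrightarrow> X \<subseteq> Y \<Longrightarrow> Y \<subseteq> S \<Longrightarrow> sum a Y > C"
    unfolding eventually_finite_subsets_at_top by (elim exE conjE) blast
  then show ?thesis by blast
qed

lemma geo_half: "(\<Sum>k. (1/2::real)^Suc k) = 1"
proof -
  have "(\<Sum>k. (1/2::real)^Suc k) = (\<Sum>k. (1/2) * (1/2::real)^k)" by simp
  also have "\<dots> = (1/2) * (\<Sum>k. (1/2::real)^k)"
    by (rule suminf_mult) simp
  also have "\<dots> = 1" by (simp add: suminf_geometric)
  finally show ?thesis .
qed

lemma four_pow: "(2::real)^k = (1/2)^Suc (Suc k) * 4^Suc k"
proof -
  have e: "(4::real)^Suc k = 2^k * 2^Suc(Suc k)"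
  proof -
    have "(4::real)^Suc k = (2^2)^Suc k" by simp
    also have "\<dots> = 2^(2 * Suc k)" by (rule power_mult[symmetric])
    also have "2 * Suc k = k + Suc (Suc k)" by simp
    also have "(2::real)^(k + Suc (Suc k)) = 2^k * 2^Suc(Suc k)" by (rule power_add)
    finally show ?thesis .
  qed
  have "(1/2::real)^Suc (Suc k) * 2^Suc(Suc k) = 1"
    by (simp only: power_mult_distrib[symmetric]) simp
  then show ?thesis unfolding e by (simp add: algebra_simps)
qed
lemma weight_le: fixes x :: real assumes "0 \<le> x" "x \<le> 1"
  shows "norm ((1/2::real)^Suc k * x) \<le> (1/2)^Suc k"
proof -
  have p: "(0::real) \<le> (1/2)^Suc k" by (rule zero_le_power) simp
  have "norm ((1/2::real)^Suc k * x) = (1/2)^Suc k * x"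
    using p assms(1) by (simp only: real_norm_def abs_mult abs_of_nonneg)
  also have "\<dots> \<le> (1/2)^Suc k * 1" using assms p by (intro mult_left_mono) auto
  finally show ?thesis by simp
qed
theorem proposition4p2:
  fixes F :: "nat set set"
  assumes "\<forall>A\<in>F. finite A \<and> A \<subseteq> {1..}"
    and "\<Union>F = {1..}"
    and "convergence_enforcing F"
  shows "\<exists>C :: real. \<forall>a :: nat \<Rightarrow> real. (\<forall>i\<in>{1..}. 0 \<le> a i) \<longrightarrow> (\<forall>A\<in>F. sum a A \<le> 1)
           \<longrightarrow> a summable_on {1..} \<and> infsum a {1..} \<le> C"
proof (rule ccontr)
  assume neg: "\<not> ?thesis"
  have CE: "\<And>a::nat\<Rightarrow>real. (\<forall>i\<in>{1..}. 0 \<le> a i) \<Longrightarrow> (\<forall>A\<in>F. sum a A \<le> 1) \<Longrightarrow> a summable_on {1..}"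
    using assms(3) unfolding convergence_enforcing_def by blast
  have ex: "\<exists>a. (\<forall>i. 0 \<le> a i) \<and> (\<forall>A\<in>F. sum a A \<le> 1) \<and> (\<forall>i. a i \<le> 1)
              \<and> (\<exists>S. finite S \<and> S \<subseteq> {1..} \<and> sum a S > (4::real)^k)" for k :: nat
  proof -
    have nk: "\<not> (\<forall>a :: nat \<Rightarrow> real. (\<forall>i\<in>{1..}. 0 \<le> a i) \<longrightarrow> (\<forall>A\<in>F. sum a A \<le> 1)
           \<longrightarrow> a summable_on {1..} \<and> infsum a {1..} \<le> (4::real)^k)"
    proof
      assume h: "\<forall>a :: nat \<Rightarrow> real. (\<forall>i\<in>{1..}. 0 \<le> a i) \<longrightarrow> (\<forall>A\<in>F. sum a A \<le> 1)
           \<longrightarrow> a summable_on {1..} \<and> infsum a {1..} \<le> (4::real)^k"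
      show False by (rule notE[OF neg], rule exI[of _ "(4::real)^k"], rule h)
    qed
    obtain a :: "nat \<Rightarrow> real" where a0: "\<forall>i\<in>{1..}. 0 \<le> a i" and a1: "\<forall>A\<in>F. sum a A \<le> 1"
      and a2: "\<not> (a summable_on {1..} \<and> infsum a {1..} \<le> 4^k)"
      using nk unfolding not_all not_imp by (elim exE conjE)
    have sa: "a summable_on {1..}" using CE a0 a1 by blast
    with a2 have gt: "infsum a {1..} > 4^k" by simp
    obtain S where S: "finite S" "S \<subseteq> {1..}" "sum a S > 4^k"
      using finite_big_subset[OF sa gt] by (elim exE conjE)
    define a' where "a' i = (if i \<in> S then a i else 0)" for i
    have p0: "\<forall>i. 0 \<le> a' i" using a0 S(2) by (auto simp: a'_def)
    have p1: "sum a' A \<le> sum a A" if "A \<in> F" for A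
    proof -
      have "finite A" "A \<subseteq> {1..}" using assms(1) that by auto
      then show ?thesis unfolding a'_def using a0
        by (intro sum_mono) auto
    qed
    have p2: "a' i \<le> 1" for i
    proof (cases "i \<in> S")
      case True
      then have "i \<in> {1..}" using S(2) by auto
      then obtain A where A: "A \<in> F" "i \<in> A" using assms(2) by blast
      have "finite A" "A \<subseteq> {1..}" using assms(1) A by auto
      have "a i \<le> sum a A"
        by (rule member_le_sum) (use A \<open>finite A\<close> \<open>A \<subseteq> {1..}\<close> a0 in auto)
      also have "\<dots> \<le> 1" using a1 A by auto
      finally show ?thesis using True by (simp add: a'_def)
    qed (simp add: a'_def)
    have "sum a' S = sum a S" by (simp add: a'_def)
    have p3: "\<forall>A\<in>F. sum a' A \<le> 1" using p1 a1 by (meson order_trans)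
    show ?thesis
      apply (rule exI[of _ a'])
      using p0 p2 p3 S \<open>sum a' S = sum a S\<close> by auto
  qed
  hence "\<forall>k. \<exists>a. (\<forall>i. 0 \<le> a i) \<and> (\<forall>A\<in>F. sum a A \<le> 1) \<and> (\<forall>i. a i \<le> 1)
              \<and> (\<exists>S. finite S \<and> S \<subseteq> {1..} \<and> sum a S > (4::real)^k)" by blast
  then obtain a :: "nat \<Rightarrow> nat \<Rightarrow> real" where
    aa: "\<forall>k. (\<forall>i. 0 \<le> a k i) \<and> (\<forall>A\<in>F. sum (a k) A \<le> 1) \<and> (\<forall>i. a k i \<le> 1)
              \<and> (\<exists>S. finite S \<and> S \<subseteq> {1..} \<and> sum (a k) S > (4::real)^k)"
    by (rule choice[THEN exE])
  have a0: "\<And>k i. 0 \<le> a k i" and a1: "\<And>k A. A \<in> F \<Longrightarrow> sum (a k) A \<le> 1"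
    and a2: "\<And>k i. a k i \<le> 1"
    and a3: "\<And>k. \<exists>S. finite S \<and> S \<subseteq> {1..} \<and> sum (a k) S > (4::real)^k"
    using aa by blast+
  define b where "b i = (\<Sum>k. (1/2::real)^Suc k * a k i)" for i
  have sg: "summable (\<lambda>k. (1/2::real)^Suc k)" by simp
  have sb: "summable (\<lambda>k. (1/2::real)^Suc k * a k i)" for i
    by (rule summable_comparison_test'[OF sg], rule weight_le[OF a0 a2])
  have b0: "\<forall>i\<in>{1..}. 0 \<le> b i" unfolding b_def
    using a0 sb by (intro ballI suminf_nonneg) auto
  have b1: "\<forall>A\<in>F. sum b A \<le> 1"
  proof
    fix A assume A: "A \<in> F"
    have "sum b A = (\<Sum>k. \<Sum>i\<in>A. (1/2::real)^Suc k * a k i)"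
      unfolding b_def by (rule suminf_sum[symmetric]) (use sb in auto)
    also have "\<dots> = (\<Sum>k. (1/2::real)^Suc k * sum (a k) A)"
      by (simp add: sum_distrib_left)
    also have "\<dots> \<le> (\<Sum>k. (1/2::real)^Suc k)"
    proof (rule suminf_le)
      show "(1/2::real)^Suc k * sum (a k) A \<le> (1/2)^Suc k" for k
        by (intro mult_left_le) (use a1[OF A, of k] in auto)
      show "summable (\<lambda>k. (1/2::real)^Suc k * sum (a k) A)"
        by (rule summable_comparison_test'[OF sg], rule weight_le)
           (use a0 a1[OF A] in \<open>auto intro: sum_nonneg\<close>)
    qed (rule sg)
    finally show "sum b A \<le> 1" using geo_half by simp
  qed
  have sbS: "b summable_on {1..}" using CE b0 b1 by blast
  have big: "infsum b {1..} \<ge> 2^k" for k :: nat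
  proof -
    obtain S where S: "finite S" "S \<subseteq> {1..}" "sum (a (Suc k)) S > 4^Suc k" using a3 by blast
    have "(2::real)^k = (1/2)^Suc (Suc k) * 4^Suc k"
      by (rule four_pow)
    also have "\<dots> \<le> (1/2)^Suc (Suc k) * sum (a (Suc k)) S"
      using S(3) by simp
    also have "\<dots> = (\<Sum>i\<in>S. (1/2)^Suc (Suc k) * a (Suc k) i)"
      by (simp add: sum_distrib_left)
    also have "\<dots> \<le> sum b S"
    proof (rule sum_mono)
      fix i
      have "(\<Sum>n\<in>{Suc k}. (1/2::real)^Suc n * a n i) \<le> b i"
        unfolding b_def by (rule sum_le_suminf[OF sb]) (use a0 in auto)
      then show "(1/2)^Suc (Suc k) * a (Suc k) i \<le> b i" by simp
    qed
    also have "\<dots> = infsum b S" using S(1) by simp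
    also have "\<dots> \<le> infsum b {1..}"
      by (rule infsum_mono_neutral) (use S b0 sbS in auto)
    finally show ?thesis .
  qed
  obtain k :: nat where "infsum b {1..} < 2^k"
    using real_arch_pow[of 2 "infsum b {1..}"] by auto
  with big[of k] show False by simp
qed

end
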